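(* Let $q$ be a prime power, $m>3$, and $n=q^m-1$. For an integer design distance $d\ge 2$, the primitive narrow-sense bicyclic hyperbolic code $\mathscr{H}(n\times n,q;d)$ over $\mathbb{F}_q$ contains its Euclidean dual if and only if $d\le\delta$, where $$\delta=\begin{cases}(q^m-1)-2(q^{m/2}-1)=(q^{m/2}-1)^2 & m \text{ even},\\ (q^m-1)-q^{(m-1)/2} & m\text{ odd}.\end{cases}$$
   Context: Bicyclic codes: linear subspaces of $\mathbb{F}_q^{n\times n}$ closed under cyclic shifts of rows and columns, identified with ideals of $\mathbb{F}_q[X,Y]/\langle X^n-1,Y^n-1\rangle$ via $c\mapsto c(X,Y)=\sum c_{i,j}X^iY^j$. Let $\alpha$ be a primitive $n$-th root of unity in $\mathbb{F}_{q^m}$. The $q$-ary cyclotomic coset of $(x,y)$ is $\mathrm{Coset}_{(x,y)}=\{(xq^k\bmod n, yq^k\bmod n):k\ge0\}$. The primitive narrow-sense bicyclic hyperbolic code $\mathscr{H}(n\times n,q;d)$ with design distance $d$ is the set of all $c\in\mathbb{F}_q^{n\times n}$ with $c(\alpha^x,\alpha^y)=0$ for all $(x,y)\in Z=\bigcup_{(x,y)\in Z_{des}}\mathrm{Coset}_{(x,y)}$, where the designed set is $Z_{des}=\{(x\bmod n,\ y\bmod n): 1\le x,y\le n,\ xy<d\}$. The Euclidean dual of $C$ is $C^\perp=\{u\in\mathbb{F}_q^{n\times n}:\sum_{i,j}u_{i,j}v_{i,j}=0\ \forall v\in C\}$. *)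

theory Defs
  imports Main "HOL-Computational_Algebra.Primes"
begin

definition arrays :: "nat \<Rightarrow> (nat \<Rightarrow> nat \<Rightarrow> 'a::zero) set" where
  "arrays n = {c. \<forall>i j. (n \<le> i \<or> n \<le> j) \<longrightarrow> c i j = 0}"

text \<open>c(alpha^x, alpha^y), with the coefficients embedded by phi into the extension field.\<close>
definition bicyc_eval ::
  "('a \<Rightarrow> 'b::comm_ring_1) \<Rightarrow> 'b \<Rightarrow> nat \<Rightarrow> (nat \<Rightarrow> nat \<Rightarrow> 'a) \<Rightarrow> nat \<Rightarrow> nat \<Rightarrow> 'b" where
  "bicyc_eval \<phi> \<alpha> n c x y = (\<Sum>i<n. \<Sum>j<n. \<phi> (c i j) * \<alpha> ^ (i * x) * \<alpha> ^ (j * y))"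

definition cyc_coset :: "nat \<Rightarrow> nat \<Rightarrow> nat \<Rightarrow> nat \<Rightarrow> (nat \<times> nat) set" where
  "cyc_coset q n x y = {((x * q ^ k) mod n, (y * q ^ k) mod n) | k. True}"

definition designed_set :: "nat \<Rightarrow> nat \<Rightarrow> (nat \<times> nat) set" where
  "designed_set n d = {(x mod n, y mod n) | x y. 1 \<le> x \<and> x \<le> n \<and> 1 \<le> y \<and> y \<le> n \<and> x * y < d}"

definition hyperbolic_zeros :: "nat \<Rightarrow> nat \<Rightarrow> nat \<Rightarrow> (nat \<times> nat) set" where
  "hyperbolic_zeros q n d = (\<Union>(x, y)\<in>designed_set n d. cyc_coset q n x y)"

definition hyperbolic_code ::
  "('a::zero \<Rightarrow> 'b::comm_ring_1) \<Rightarrow> 'b \<Rightarrow> nat \<Rightarrow> nat \<Rightarrow> nat \<Rightarrow> (nat \<Rightarrow> nat \<Rightarrow> 'a) set" where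
  "hyperbolic_code \<phi> \<alpha> q n d =
     {c \<in> arrays n. \<forall>(x, y)\<in>hyperbolic_zeros q n d. bicyc_eval \<phi> \<alpha> n c x y = 0}"

definition euclid_dual :: "nat \<Rightarrow> (nat \<Rightarrow> nat \<Rightarrow> 'a::comm_ring) set \<Rightarrow> (nat \<Rightarrow> nat \<Rightarrow> 'a) set" where
  "euclid_dual n C = {u \<in> arrays n. \<forall>v\<in>C. (\<Sum>i<n. \<Sum>j<n. u i j * v i j) = 0}"

end

theory Submission
  imports Defs "HOL-Number_Theory.Residues" "HOL-Computational_Algebra.Polynomial"
begin


lemma even_L:
  fixes Q K K' u u' n :: int
  assumes Q: "Q \<ge> 2" and KK: "K * K' = Q^2" and Kp: "K \<ge> 1" "K' \<ge> 1" and n: "n = Q^2 - 1"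
    and c1: "u + K * u' \<ge> n" and c2: "K' * u + u' \<ge> n"
    and u: "u \<ge> 1" "u' \<ge> 1" and small: "u \<le> Q - 2"
  shows "u' \<ge> Q - 1"
proof (cases "K' \<le> Q")
  case True
  have "K' * u \<le> Q * (Q - 2)" using True small u Kp by (intro mult_mono) auto
  moreover have "Q * (Q - 2) = Q^2 - 2*Q" by (simp add: power2_eq_square algebra_simps)
  ultimately show ?thesis using c2 n Q by linarith
next
  case False
  have "K < Q"
  proof (rule ccontr)
    assume "\<not> K < Q"
    then have "Q * Q < K * K'" using False Q mult_le_less_imp_less[of Q K Q K'] by auto  
    then show False using KK by (simp add: power2_eq_square)
  qed
  show ?thesis
  proof (rule ccontr)
    assume "\<not> u' \<ge> Q - 1"
    then have "u' \<le> Q - 2" by simp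
    then have "K * u' \<le> (Q - 1) * (Q - 2)" using \<open>K < Q\<close> Kp u by (intro mult_mono) auto
    moreover have "(Q - 1) * (Q - 2) = Q^2 - 3*Q + 2" by (simp add: power2_eq_square algebra_simps)
    ultimately show False using c1 n small Q by linarith
  qed
qed

lemma g_bound:
  fixes Q n t :: int
  assumes "Q - 1 \<le> t" "t \<le> n - Q + 1"
  shows "t * (n - t) \<ge> (Q - 1) * (n - Q + 1)"
proof -
  have "t * (n - t) - (Q - 1) * (n - Q + 1) = (t - Q + 1) * (n - Q + 1 - t)"
    by (simp add: algebra_simps)
  moreover have "(t - Q + 1) * (n - Q + 1 - t) \<ge> 0" using assms by simp
  ultimately show ?thesis by linarith
qed

lemma prod_lower:
  fixes n K K' a b c d :: int
  assumes "K * a \<ge> n - c" "K' * b \<ge> n - d" "n - c \<ge> 0" "n - d \<ge> 0"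
  shows "(K * K') * (a * b) \<ge> (n - c) * (n - d)"
proof -
  have "(n - c) * (n - d) \<le> (K * a) * (K' * b)" using assms by (intro mult_mono) auto
  also have "\<dots> = (K * K') * (a * b)" by (simp add: algebra_simps)
  finally show ?thesis .
qed

lemma even_main:
  fixes Q K K' x x' y y' n :: int
  assumes Q: "Q \<ge> 2" and KK: "K * K' = Q^2" and Kp: "K \<ge> 1" "K' \<ge> 1" and n: "n = Q^2 - 1"
    and cx1: "x + K * x' \<ge> n" and cx2: "K' * x + x' \<ge> n"
    and cy1: "y + K * y' \<ge> n" and cy2: "K' * y + y' \<ge> n"
    and pos: "x \<ge> 1" "x' \<ge> 1" "y \<ge> 1" "y' \<ge> 1"
  shows "x * y \<ge> (Q - 1)^2 \<or> x' * y' \<ge> (Q - 1)^2"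
proof (rule ccontr)
  assume "\<not> ?thesis"
  then have P: "x * y < (Q - 1)^2" and P': "x' * y' < (Q - 1)^2" by auto
  define F where "F = (Q - 1) * (n - Q + 1)"
  have dn: "(Q - 1)^2 \<le> n - Q + 1" using n Q by (simp add: power2_eq_square algebra_simps)
  have "x \<le> x * y" "y \<le> x * y" "x' \<le> x' * y'" "y' \<le> x' * y'" using pos by (simp_all add: mult_le_cancel_left1 mult_le_cancel_right1)
  then have ub: "x < n - Q + 1" "y < n - Q + 1" "x' < n - Q + 1" "y' < n - Q + 1" using P P' dn by linarith+
  have FF: "F = Q * (Q - 1)^2" unfolding F_def n by (simp add: power2_eq_square algebra_simps)
  have d1: "(Q - 1)^2 \<ge> 1" using Q by (simp add: power2_eq_square) (smt (verit) mult_le_cancel_left1)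
  have PP: "(n + 1) * ((x * y) * (x' * y')) < F * F"
  proof -
    have "(x * y) * (x' * y') < (Q - 1)^2 * (Q - 1)^2"
      using P P' pos d1 by (intro mult_strict_mono) auto
    then have "Q^2 * ((x * y) * (x' * y')) < Q^2 * ((Q - 1)^2 * (Q - 1)^2)"
      using Q by (intro mult_strict_left_mono) auto
    also have "\<dots> = F * F" unfolding FF by (simp add: power2_eq_square algebra_simps)
    finally show ?thesis using n by simp
  qed
  have key1: "\<not> (x' \<ge> Q - 1 \<and> y \<ge> Q - 1)"
  proof
    assume h: "x' \<ge> Q - 1 \<and> y \<ge> Q - 1"
    have I: "(K' * K) * (x * y') \<ge> (n - x') * (n - y)"
      using cx2 cy1 ub Q by (intro prod_lower) (auto simp: algebra_simps)
    then have I': "(n + 1) * (x * y') \<ge> (n - x') * (n - y)" using KK n by (simp add: mult.commute)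
    have "(n + 1) * (x * y') * (x' * y) \<ge> (n - x') * (n - y) * (x' * y)"
      using I' pos by (intro mult_right_mono) auto
    moreover have "(n + 1) * (x * y') * (x' * y) = (n + 1) * ((x * y) * (x' * y'))" by (simp add: algebra_simps)
    moreover have "(n - x') * (n - y) * (x' * y) = (x' * (n - x')) * (y * (n - y))" by (simp add: algebra_simps)
    moreover have "(x' * (n - x')) * (y * (n - y)) \<ge> F * F"
    proof -
      have a: "x' * (n - x') \<ge> F" unfolding F_def using h ub by (intro g_bound) auto
      have b: "y * (n - y) \<ge> F" unfolding F_def using h ub by (intro g_bound) auto
      have "F \<ge> 0" unfolding FF using Q by simp
      then show ?thesis using a b by (intro mult_mono) auto
    qed
    ultimately show False using PP by linarith
  qed
  have key2: "\<not> (x \<ge> Q - 1 \<and> y' \<ge> Q - 1)"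
  proof
    assume h: "x \<ge> Q - 1 \<and> y' \<ge> Q - 1"
    have I: "(K * K') * (x' * y) \<ge> (n - x) * (n - y')"
      using cx1 cy2 ub Q by (intro prod_lower) (auto simp: algebra_simps)
    then have I': "(n + 1) * (x' * y) \<ge> (n - x) * (n - y')" using KK n by simp
    have "(n + 1) * (x' * y) * (x * y') \<ge> (n - x) * (n - y') * (x * y')"
      using I' pos by (intro mult_right_mono) auto
    moreover have "(n + 1) * (x' * y) * (x * y') = (n + 1) * ((x * y) * (x' * y'))" by (simp add: algebra_simps)
    moreover have "(n - x) * (n - y') * (x * y') = (x * (n - x)) * (y' * (n - y'))" by (simp add: algebra_simps)
    moreover have "(x * (n - x)) * (y' * (n - y')) \<ge> F * F"
    proof -
      have a: "x * (n - x) \<ge> F" unfolding F_def using h ub by (intro g_bound) auto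
      have b: "y' * (n - y') \<ge> F" unfolding F_def using h ub by (intro g_bound) auto
      have "F \<ge> 0" unfolding FF using Q by simp
      then show ?thesis using a b by (intro mult_mono) auto
    qed
    ultimately show False using PP by linarith
  qed
  have Lx: "x \<le> Q - 2 \<Longrightarrow> x' \<ge> Q - 1" using even_L[OF Q KK Kp n cx1 cx2] pos by auto
  have Lx': "x' \<le> Q - 2 \<Longrightarrow> x \<ge> Q - 1"
    using even_L[of Q K' K n x' x] Q KK Kp n cx1 cx2 pos by (auto simp: mult.commute add.commute)
  have Ly: "y \<le> Q - 2 \<Longrightarrow> y' \<ge> Q - 1" using even_L[OF Q KK Kp n cy1 cy2] pos by auto
  have Ly': "y' \<le> Q - 2 \<Longrightarrow> y \<ge> Q - 1"
    using even_L[of Q K' K n y' y] Q KK Kp n cy1 cy2 pos by (auto simp: mult.commute add.commute)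
  have sq: "a \<ge> Q - 1 \<Longrightarrow> b \<ge> Q - 1 \<Longrightarrow> a * b \<ge> (Q - 1)^2" for a b :: int
    using Q by (simp add: power2_eq_square mult_mono)
  show False
    using key1 key2 Lx Lx' Ly Ly' sq[of x y] sq[of x' y'] P P' by linarith
qed



lemma lin_aux:
  fixes a b c e f g X Y r :: int
  assumes "a \<le> b" "c \<le> e" "f - e = r" "r > 0" "X - Y = f - (a + g)" "a + g = a - b + c"
  shows "Y < X"
  using assms by linarith

locale oddset =
  fixes q Q0 n L L' :: int
  assumes q2: "q \<ge> 2" and Q4: "Q0 \<ge> 4" and n1: "n + 1 = q * Q0^2"
    and LL: "L * L' = n + 1" and L1: "L \<ge> 1" and LQ: "L \<le> Q0"
begin

lemma basic: "L^2 \<le> Q0^2" "2 * Q0^2 \<le> n + 1" "L < L'" "L' \<ge> 1" "n \<ge> 31" "Q0 + 1 < n"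
proof -
  have "Q0 \<le> Q0^2" using Q4 by (simp add: power2_eq_square)
  moreover have "2 * Q0^2 \<le> n + 1" using n1 q2 by (simp add: mult_right_mono)
  moreover have "Q0^2 \<ge> 16" using Q4 power_mono[of 4 Q0 2] by simp
  ultimately show "Q0 + 1 < n" using Q4 by linarith
  show a: "L^2 \<le> Q0^2" using L1 LQ by (simp add: power_mono)
  show b: "2 * Q0^2 \<le> n + 1" using n1 q2 by (simp add: mult_right_mono)
  have "Q0^2 \<ge> 16" using Q4 power_mono[of 4 Q0 2] by simp
  then show "n \<ge> 31" using b by linarith
  have "L * L < L * L'"
  proof -
    have "L * L \<le> Q0^2" using a by (simp add: power2_eq_square)
    also have "Q0^2 < n + 1" using b \<open>Q0^2 \<ge> 16\<close> by linarith
    finally show ?thesis using LL by simp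
  qed
  then show "L < L'" using L1 by simp
  then show "L' \<ge> 1" using L1 by simp
qed

lemma case_c:
  fixes x x' y y' :: int
  assumes cx1: "L * x + x' \<ge> n" and cx2: "x + L' * x' \<ge> n"
    and cy1: "L * y + y' \<ge> n" and cy2: "y + L' * y' \<ge> n"
    and pos: "x \<ge> 1" "x' \<ge> 1" "y \<ge> 1" "y' \<ge> 1"
    and L2: "L \<ge> 2" and hx: "x \<ge> L'"
  shows "x * y \<ge> n - Q0 \<or> x' * y' \<ge> n - Q0"
proof (rule ccontr)
  assume "\<not> ?thesis"
  then have P: "x * y < n - Q0" and P': "x' * y' < n - Q0" by auto
  note bs = basic
  have "L' * y \<le> x * y" using hx pos by (simp add: mult_right_mono)
  then have "L' * y < L' * L" using P LL Q4 by (simp add: mult.commute)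
  then have yL: "y \<le> L - 1" using bs by simp
  have "L * y \<le> L * (L - 1)" using yL L1 by (simp add: mult_left_mono)
  then have y'b: "y' \<ge> n - L * (L - 1)" using cy1 by linarith
  have LL2: "L * (L - 1) \<le> Q0^2" using bs(1) L1 by (simp add: power2_eq_square algebra_simps)
  show False
  proof (cases "x' \<ge> 2")
    case True
    have "2 * (n - L * (L - 1)) \<le> x' * y'"
      using True y'b LL2 bs by (intro mult_mono) auto
    moreover have "2 * (n - L * (L - 1)) = 2 * n - 2 * (L * (L - 1))" by simp
    ultimately show False using P' LL2 bs Q4 by linarith
  next
    case False
    then have x'1: "x' = 1" using pos by simp
    then have xb: "x \<ge> n - L'" using cx2 by simp
    show False
    proof (cases "y \<ge> 2")
      case True
      have "(n - L') * 2 \<le> x * y" using xb True pos by (intro mult_mono) auto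
      moreover have "2 * L' \<le> L * L'" using L2 bs by (intro mult_right_mono) auto
      moreover have "(n - L') * 2 = 2 * n - 2 * L'" by simp
      ultimately show False using P LL Q4 by linarith
    next
      case False
      then have "y = 1" using pos by simp
      then have "y' \<ge> n - L" using cy1 by simp
      then show False using P' x'1 LQ by simp
    qed
  qed
qed

lemma odd_main:
  fixes x x' y y' :: int
  assumes cx1: "L * x + x' \<ge> n" and cx2: "x + L' * x' \<ge> n"
    and cy1: "L * y + y' \<ge> n" and cy2: "y + L' * y' \<ge> n"
    and pos: "x \<ge> 1" "x' \<ge> 1" "y \<ge> 1" "y' \<ge> 1"
  shows "x * y \<ge> n - Q0 \<or> x' * y' \<ge> n - Q0"
proof (rule ccontr)
  assume "\<not> ?thesis"
  then have P: "x * y < n - Q0" and P': "x' * y' < n - Q0" by auto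
  note bs = basic
  define D where "D = n - Q0 - 1"
  have PD: "x * y \<le> D" "x' * y' \<le> D" using P P' D_def by auto
  have "x \<le> x * y" "y \<le> x * y" "x' \<le> x' * y'" "y' \<le> x' * y'" using pos by (simp_all add: mult_le_cancel_left1 mult_le_cancel_right1)
  then have ub: "x \<le> D" "y \<le> D" "x' \<le> D" "y' \<le> D" using PD by linarith+
  show False
  proof (cases "L = 1")
    case True
    have "(n - x) * (n - y) \<le> x' * y'"
      using cx1 cy1 True ub D_def Q4 by (intro mult_mono) auto
    moreover have "(n - x) * (n - y) - (n - 1) * (n - x * y) = n * ((x - 1) * (y - 1))"
      by (simp add: algebra_simps)
    moreover have "n * ((x - 1) * (y - 1)) \<ge> 0" using pos bs by simp
    moreover have "(n - 1) * (n - x * y) \<ge> (n - 1) * (Q0 + 1)"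
      using PD D_def bs by (intro mult_left_mono) auto
    moreover have "(n - 1) * (Q0 + 1) \<ge> (n - 1) * 1" using bs Q4 by (intro mult_left_mono) auto
    moreover have "(n - 1) * 1 = n - 1" by simp
    ultimately have "x' * y' \<ge> n - 1" by linarith
    then show False using P' Q4 by linarith
  next
    case False
    then have L2: "L \<ge> 2" using L1 by simp
    show False
    proof (cases "x \<ge> L'")
      case hx: True
      show False
      proof (cases "y \<ge> L'")
        case True
        have "L' * L' \<le> x * y" using hx True bs by (intro mult_mono) auto
        moreover have "L * L' \<le> L' * L'" using bs by (intro mult_right_mono) auto
        ultimately show False using P LL Q4 by linarith
      next
        case False
        show False using case_c[OF cx1 cx2 cy1 cy2 pos L2 hx] P P' by auto
      qed
    next
      case hx: False
      show False
      proof (cases "y \<ge> L'")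
        case True
        show False using case_c[OF cy1 cy2 cx1 cx2 pos(3,4,1,2) L2 True] P P'
          by (auto simp: mult.commute)
      next
        case hy: False
        define A where "A = L * x"
        define B where "B = L * y"
        define B0 where "B0 = n + 1 - L"
        have B0L: "B0 = L * (L' - 1)" unfolding B0_def using LL by (simp add: algebra_simps)
        have AB0: "A \<le> B0" unfolding A_def B0L using hx L1 by (intro mult_left_mono) auto
        have BB0: "B \<le> B0" unfolding B_def B0L using hy L1 by (intro mult_left_mono) auto
        have "(n - A) * (n - B) \<le> x' * y'"
          using cx1 cy1 AB0 BB0 B0_def L2 unfolding A_def B_def by (intro mult_mono) auto
        then have "B0 * ((n - A) * (n - B)) \<le> B0 * (x' * y')"
          using B0_def bs LQ Q4 by (intro mult_left_mono) auto
        also have "\<dots> \<le> B0 * D" using PD B0_def bs LQ Q4 by (intro mult_left_mono) auto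
        finally have up: "B0 * ((n - A) * (n - B)) \<le> B0 * D" .
        have iden: "B0 * ((n - A) * (n - B)) = (n * B0 - A * B) * (L - 1) + n * ((B0 - A) * (B0 - B))"
          unfolding B0_def by (simp add: algebra_simps)
        have "n * ((B0 - A) * (B0 - B)) \<ge> 0" using AB0 BB0 bs by simp
        moreover have ABle: "A * B \<le> L^2 * D"
        proof -
          have "A * B = L^2 * (x * y)" unfolding A_def B_def by (simp add: power2_eq_square algebra_simps)
          also have "\<dots> \<le> L^2 * D" using PD by (intro mult_left_mono) auto
          finally show ?thesis .
        qed
        moreover have nB0: "n - B0 = L - 1" unfolding B0_def by simp
        moreover have "(n * B0 - A * B) * (L - 1) \<ge> (n * B0 - L^2 * D) * (L - 1)"
          using ABle L1 by (intro mult_right_mono) auto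
        moreover have goal: "(n * B0 - L^2 * D) * (L - 1) > B0 * D"
        proof (cases "L = 2")
          case True
          have "(n * B0 - L^2 * D) * (L - 1) - B0 * D = Q0 * (n + 3) - 3 * n + 3"
            unfolding True B0_def D_def by (simp add: power2_eq_square algebra_simps)
          moreover have "Q0 * (n + 3) \<ge> 4 * (n + 3)" using Q4 bs by (intro mult_right_mono) auto
          moreover have "4 * (n + 3) = 4 * n + 12" by simp
          ultimately show ?thesis using bs by linarith
        next
          case False
          then have L3: "L \<ge> 3" using L2 by simp
          have L2le: "2 * L^2 \<le> n + 1" using bs by linarith
          have nn: "n * B0 - L^2 * D \<ge> 0"
          proof -
            have a: "L^2 * D \<le> L^2 * n" using D_def Q4 by (intro mult_left_mono) auto
            have "L \<le> L^2" using L1 by (simp add: power2_eq_square)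
            then have "L^2 \<le> B0" using L2le B0_def LQ bs by linarith
            then have "L^2 * n \<le> B0 * n" using bs by (intro mult_right_mono) auto
            then show ?thesis using a by (simp add: mult.commute)
          qed
          have "(n * B0 - L^2 * D) * (L - 1) \<ge> (n * B0 - L^2 * D) * 2"
            using nn L3 by (intro mult_left_mono) auto
          moreover have "(n * B0 - L^2 * D) * 2 > B0 * D"
          proof -
            have h1: "2 * L^2 * D \<le> (n + 1) * D" using L2le D_def LQ bs by (intro mult_right_mono) auto
            have h2: "(2 * n + 2 - L) * D \<le> (2 * n + 2 - L) * (n - L - 1)"
              using D_def LQ bs by (intro mult_left_mono) auto
            have h3: "2 * n * (n + 1 - L) - (2 * n + 2 - L) * (n - L - 1) = 2 * n + n * L + L + 2 - L^2"
              by (simp add: power2_eq_square algebra_simps)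
            have "L^2 \<le> n * L" using bs L1 LQ by (simp add: power2_eq_square mult_right_mono)
            then have h4: "2 * n + n * L + L + 2 - L^2 > 0" using bs L1 by linarith
            have h5: "(n * B0 - L^2 * D) * 2 - B0 * D = 2 * n * (n + 1 - L) - (2 * L^2 * D + (n + 1 - L) * D)"
              unfolding B0_def by (simp add: algebra_simps)
            have h6: "2 * L^2 * D + (n + 1 - L) * D = 2 * L^2 * D - (n + 1) * D + (2 * n + 2 - L) * D"
              by (simp add: algebra_simps)
            show ?thesis by (rule lin_aux[OF h1 h2 h3 h4 h5 h6])
          qed
          ultimately show ?thesis by linarith
        qed
        ultimately show False using up iden by linarith
      qed
    qed
  qed
qed

end



lemma field_power_card_same:
  fixes x :: "'a :: {field,finite}"
  shows "x ^ card (UNIV :: 'a set) = x"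
proof (cases "x = 0")
  case False
  have "x * (\<Prod>y\<in>UNIV-{0}. x * y) = x * x ^ (card (UNIV :: 'a set) - 1) * \<Prod>(UNIV-{0})"
    by (simp add: prod.distrib mult_ac)
  also have "x * x ^ (card (UNIV :: 'a set) - 1) = x ^ Suc (card (UNIV :: 'a set) - 1)"
    by (subst power_Suc) auto
  also have "Suc (card (UNIV :: 'a set) - 1) = card (UNIV :: 'a set)"
    using finite_UNIV_card_ge_0[where ?'a = 'a] by simp
  also have "(\<Prod>y\<in>UNIV-{0}. x * y) = (\<Prod>y\<in>UNIV-{0}. y)"
    by (rule prod.reindex_bij_witness[of _ "\<lambda>y. y / x" "\<lambda>y. x * y"]) (use False in auto)
  finally show ?thesis
    by simp
qed (use finite_UNIV_card_ge_0[where ?'a = 'a] in auto)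

locale bsetup =
  fixes \<phi> :: "'a::{field,finite} \<Rightarrow> 'b::{field,finite}"
    and \<alpha> :: 'b and q m n :: nat
  assumes q_card: "q = card (UNIV :: 'a set)"
    and q_pp: "\<exists>p k. prime p \<and> 0 < k \<and> q = p ^ k"
    and m_gt: "m > 3"
    and n_def: "n = q ^ m - 1"
    and ext_card: "card (UNIV :: 'b set) = q ^ m"
    and hom_add: "\<And>a b. \<phi> (a + b) = \<phi> a + \<phi> b"
    and hom_mult: "\<And>a b. \<phi> (a * b) = \<phi> a * \<phi> b"
    and hom_one: "\<phi> 1 = 1"
    and prim1: "\<alpha> ^ n = 1"
    and prim2: "\<forall>k. 0 < k \<and> k < n \<longrightarrow> \<alpha> ^ k \<noteq> 1"
begin

lemma hom_zero: "\<phi> 0 = 0"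
  using hom_add[of 0 0] by (metis add_cancel_right_right add_0)

lemma hom_sum: "\<phi> (sum f A) = (\<Sum>x\<in>A. \<phi> (f x))"
  by (induction A rule: infinite_finite_induct) (auto simp: hom_zero hom_add)

lemma hom_of_nat: "\<phi> (of_nat k) = of_nat k"
  by (induction k) (auto simp: hom_zero hom_add hom_one)

lemma hom_power: "\<phi> (a ^ k) = \<phi> a ^ k"
  by (induction k) (auto simp: hom_one hom_mult)

lemma hom_inj: "inj \<phi>"
proof (rule injI)
  fix a b assume h: "\<phi> a = \<phi> b"
  show "a = b"
  proof (rule ccontr)
    assume "a \<noteq> b"
    then have "\<phi> ((a - b) * inverse (a - b)) = 1" by (simp add: hom_one)
    moreover have "\<phi> (a - b) = 0" using h hom_add[of "a - b" b] by simp
    ultimately show False by (simp add: hom_mult)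
  qed
qed

lemma q_ge2: "q \<ge> 2"
proof -
  obtain p k where pk: "prime p" "0 < k" "q = p ^ k" using q_pp by blast
  have "p \<ge> 2" using pk(1) by (rule prime_ge_2_nat)
  moreover have "p \<le> p ^ k" using pk(2) \<open>p \<ge> 2\<close> by (simp add: self_le_power)
  ultimately show ?thesis using pk(3) by simp
qed

lemma n_pos: "n \<ge> 1"
proof -
  have "q ^ m \<ge> 2 ^ m" using q_ge2 by (simp add: power_mono)
  moreover have "2 ^ m \<ge> (2::nat) ^ 1" using m_gt by (intro power_increasing) auto
  ultimately show ?thesis using n_def by simp
qed

lemma qm: "q ^ m = n + 1"
  using n_def n_pos by simp

lemma ofnat_q_a: "of_nat q = (0::'a)"
  unfolding q_card of_nat_eq_0_iff_char_dvd by (rule CHAR_dvd_CARD)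

lemma ofnat_q_b: "of_nat q = (0::'b)"
  using hom_of_nat[of q] ofnat_q_a hom_zero by simp

lemma char_b: "prime CHAR('b)" "\<exists>k. q = CHAR('b) ^ k"
proof -
  show pc: "prime CHAR('b)"
    by (rule prime_CHAR_semidom) (simp add: finite_imp_CHAR_pos)
  obtain p k where pk: "prime p" "0 < k" "q = p ^ k" using q_pp by blast
  have "of_nat (p ^ k) = (0::'b)" using ofnat_q_b pk by simp
  then have "CHAR('b) dvd p ^ k" by (simp only: of_nat_eq_0_iff_char_dvd)
  then have "CHAR('b) dvd p" using pc prime_dvd_power by blast
  then have "CHAR('b) = p" using pc pk by (simp add: primes_dvd_imp_eq)
  then show "\<exists>k. q = CHAR('b) ^ k" using pk by blast
qed

lemma frob_add: "(x + y :: 'b) ^ (q ^ j) = x ^ (q ^ j) + y ^ (q ^ j)"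
proof -
  obtain k where k: "q = CHAR('b) ^ k" using char_b by blast
  show ?thesis by (rule freshmans_dream'[OF char_b(1), where n="k*j"]) (simp add: k power_mult)
qed

lemma frob_sum: "(sum f A :: 'b) ^ (q ^ j) = (\<Sum>i\<in>A. f i ^ (q ^ j))"
proof -
  obtain k where k: "q = CHAR('b) ^ k" using char_b by blast
  show ?thesis by (rule freshmans_dream_sum'[OF char_b(1), where n="k*j"]) (simp add: k power_mult)
qed

lemma pow_a: "(x::'a) ^ q = x"
  unfolding q_card by (rule field_power_card_same)

lemma pow_b: "(x::'b) ^ (q ^ m) = x"
  unfolding ext_card[symmetric] by (rule field_power_card_same)

lemma phi_fixed: "\<phi> c ^ (q ^ j) = \<phi> c"
proof (induction j)
  case (Suc j)
  have "\<phi> c ^ (q ^ Suc j) = (\<phi> c ^ (q ^ j)) ^ q" by (simp only: power_Suc2 power_mult)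
  also have "\<dots> = \<phi> c ^ q" using Suc by simp
  also have "\<dots> = \<phi> (c ^ q)" by (simp add: hom_power)
  finally show ?case by (simp add: pow_a)
qed simp

lemma roots_card: "card {z::'b. z ^ q = z} \<le> q"
proof -
  define p :: "'b poly" where "p = monom 1 q - monom 1 1"
  have c: "coeff p q = 1" unfolding p_def using q_ge2 by simp
  then have "p \<noteq> 0" by auto
  have "degree p \<le> q" unfolding p_def
  proof (rule order.trans[OF degree_diff_le_max])
    have "degree (monom (1::'b) 1) \<le> 1" by (rule degree_monom_le)
    then show "max (degree (monom (1::'b) q)) (degree (monom (1::'b) 1)) \<le> q"
      using q_ge2 degree_monom_le[of "1::'b" q] by simp
  qed
  moreover have "{z. poly p z = 0} = {z::'b. z ^ q = z}" unfolding p_def by (auto simp: poly_monom)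
  ultimately show ?thesis using card_poly_roots_bound[OF \<open>p \<noteq> 0\<close>] by simp
qed

lemma range_phi: "range \<phi> = {z. z ^ q = z}"
proof -
  have sub: "range \<phi> \<subseteq> {z. z ^ q = z}" using phi_fixed[of _ 1] by auto
  have "card (range \<phi>) = q" using hom_inj q_card by (simp add: card_image)
  then show ?thesis using card_seteq[OF _ sub] roots_card by simp
qed

definition psi :: "'b \<Rightarrow> 'a" where "psi = inv_into UNIV \<phi>"

lemma phi_psi: "z ^ q = z \<Longrightarrow> \<phi> (psi z) = z"
  unfolding psi_def by (intro f_inv_into_f) (simp add: range_phi)

lemma phi_eq0: "\<phi> a = 0 \<longleftrightarrow> a = 0"
  using injD[OF hom_inj, of a 0] hom_zero by auto

definition Tr :: "'b \<Rightarrow> 'b" where "Tr w = (\<Sum>k<m. w ^ (q ^ k))"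

lemma Tr_fixed: "Tr w ^ q = Tr w"
proof -
  have "Tr w ^ q = Tr w ^ (q ^ 1)" by simp
  also have "\<dots> = (\<Sum>k<m. (w ^ (q ^ k)) ^ (q ^ 1))" unfolding Tr_def by (rule frob_sum)
  also have "\<dots> = (\<Sum>k<m. w ^ (q ^ Suc k))" by (simp add: power_mult[symmetric] mult.commute)
  also have "\<dots> = Tr w"
  proof -
    have "(\<Sum>k<Suc m. w ^ (q ^ k)) = w ^ (q ^ 0) + (\<Sum>k<m. w ^ (q ^ Suc k))" by (rule sum.lessThan_Suc_shift)
    moreover have "(\<Sum>k<Suc m. w ^ (q ^ k)) = (\<Sum>k<m. w ^ (q ^ k)) + w ^ (q ^ m)" by simp
    ultimately show ?thesis unfolding Tr_def using pow_b[of w] by (simp add: add.commute)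
  qed
  finally show ?thesis .
qed

lemma Tr_sum: "Tr (sum f A) = (\<Sum>i\<in>A. Tr (f i))"
  unfolding Tr_def by (simp add: frob_sum sum.swap[of _ A])

lemma Tr_scale: "Tr (\<phi> c * w) = \<phi> c * Tr w"
  unfolding Tr_def by (simp add: power_mult_distrib phi_fixed sum_distrib_left)

lemma Tr_zero: "Tr 0 = 0"
  unfolding Tr_def using q_ge2 by (simp add: power_0_left)

lemma ofnat_n: "(of_nat n :: 'b) = - 1"
proof -
  have "(of_nat (n + 1) :: 'b) = of_nat q ^ m" unfolding qm[symmetric] by simp
  then have "(of_nat n :: 'b) + 1 = 0" using ofnat_q_b m_gt by (simp add: power_0_left add.commute)
  then show ?thesis by (simp add: eq_neg_iff_add_eq_0)
qed

lemma alpha_pow_mod: "\<alpha> ^ s = \<alpha> ^ (s mod n)"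
proof -
  have "\<alpha> ^ s = \<alpha> ^ (n * (s div n) + s mod n)" by simp
  also have "\<dots> = (\<alpha> ^ n) ^ (s div n) * \<alpha> ^ (s mod n)" by (simp only: power_add power_mult)
  also have "\<dots> = \<alpha> ^ (s mod n)" by (simp add: prim1)
  finally show ?thesis .
qed

lemma geo: "(\<Sum>i<n. \<alpha> ^ (i * s)) = (if n dvd s then - 1 else 0)"
proof (cases "n dvd s")
  case True
  then have "\<alpha> ^ s = 1" using alpha_pow_mod[of s] prim1 by simp
  then have "\<alpha> ^ (i * s) = 1" for i by (simp add: mult.commute[of i s] power_mult)
  then show ?thesis using True ofnat_n by simp
next
  case False
  have ne: "\<alpha> ^ s \<noteq> 1"
  proof
    assume "\<alpha> ^ s = 1"
    then have "\<alpha> ^ (s mod n) = 1" using alpha_pow_mod[of s] by simp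
    moreover have "0 < s mod n" using False by (simp add: mod_greater_zero_iff_not_dvd)
    moreover have "s mod n < n" using n_pos by simp
    ultimately show False using prim2 by blast
  qed
  have "(\<alpha> ^ s) ^ n - 1 = (\<alpha> ^ s - 1) * (\<Sum>i<n. (\<alpha> ^ s) ^ i)" by (rule power_diff_1_eq)
  moreover have "(\<alpha> ^ s) ^ n = 1" by (simp add: power_mult[symmetric] mult.commute power_mult prim1)
  ultimately have "(\<Sum>i<n. (\<alpha> ^ s) ^ i) = 0" using ne by simp
  then show ?thesis using False by (simp add: power_mult[symmetric] mult.commute)
qed

lemma nondeg:
  fixes c :: "nat \<Rightarrow> 'b"
  assumes "c 0 \<noteq> 0"
  shows "\<exists>\<beta>. (\<Sum>k<m. c k * \<beta> ^ (q ^ k)) \<noteq> 0"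
proof -
  define p where "p = (\<Sum>k<m. monom (c k) (q ^ k))"
  have ev: "poly p \<beta> = (\<Sum>k<m. c k * \<beta> ^ (q ^ k))" for \<beta>
    unfolding p_def by (simp add: poly_sum poly_monom)
  have inj: "q ^ k = 1 \<longleftrightarrow> k = 0" for k using q_ge2 by simp
  have "coeff p 1 = (\<Sum>k<m. if q ^ k = 1 then c k else 0)"
    unfolding p_def by (simp add: coeff_sum)
  also have "\<dots> = (\<Sum>k\<in>{0}. c k)"
    using m_gt inj by (intro sum.mono_neutral_cong_right) auto
  finally have "coeff p 1 \<noteq> 0" using assms by simp
  then have pnz: "p \<noteq> 0" by auto
  have "degree p \<le> q ^ (m - 1)"
  proof (rule degree_le, intro allI impI)
    fix i assume i: "q ^ (m - 1) < i"
    have "q ^ k \<noteq> i" if "k < m" for k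
    proof -
      have "q ^ k \<le> q ^ (m - 1)" using that q_ge2 by (intro power_increasing) auto
      then show ?thesis using i by simp
    qed
    then show "coeff p i = 0" unfolding p_def by (simp add: coeff_sum)
  qed
  moreover have "q ^ (m - 1) < q ^ m" using q_ge2 m_gt by (intro power_strict_increasing) auto
  ultimately have "card {x. poly p x = 0} < card (UNIV :: 'b set)"
    using card_poly_roots_bound[OF pnz] ext_card by linarith
  then have "{x. poly p x = 0} \<noteq> UNIV" by auto
  then show ?thesis using ev by auto
qed

definition arr :: "'b \<Rightarrow> nat \<Rightarrow> nat \<Rightarrow> nat \<Rightarrow> nat \<Rightarrow> 'a" where
  "arr \<beta> x y i j = (if i < n \<and> j < n then psi (Tr (\<beta> * \<alpha> ^ (i * x) * \<alpha> ^ (j * y))) else 0)"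

lemma phi_arr: "i < n \<Longrightarrow> j < n \<Longrightarrow> \<phi> (arr \<beta> x y i j) = Tr (\<beta> * \<alpha> ^ (i * x) * \<alpha> ^ (j * y))"
  unfolding arr_def by (simp add: phi_psi Tr_fixed)

lemma arr_arrays: "arr \<beta> x y \<in> arrays n"
  unfolding arrays_def arr_def by auto

lemma pair_arr:
  "\<phi> (\<Sum>i<n. \<Sum>j<n. c i j * arr \<beta> x y i j) = Tr (\<beta> * bicyc_eval \<phi> \<alpha> n c x y)"
proof -
  have "\<phi> (\<Sum>i<n. \<Sum>j<n. c i j * arr \<beta> x y i j) = (\<Sum>i<n. \<Sum>j<n. \<phi> (c i j) * Tr (\<beta> * \<alpha> ^ (i * x) * \<alpha> ^ (j * y)))"
    by (simp add: hom_sum hom_mult phi_arr)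
  also have "\<dots> = (\<Sum>i<n. \<Sum>j<n. Tr (\<beta> * (\<phi> (c i j) * \<alpha> ^ (i * x) * \<alpha> ^ (j * y))))"
    by (intro sum.cong refl) (simp add: Tr_scale[symmetric] mult_ac)
  also have "\<dots> = Tr (\<Sum>i<n. \<Sum>j<n. \<beta> * (\<phi> (c i j) * \<alpha> ^ (i * x) * \<alpha> ^ (j * y)))"
    by (simp add: Tr_sum)
  also have "\<dots> = Tr (\<beta> * bicyc_eval \<phi> \<alpha> n c x y)"
    unfolding bicyc_eval_def by (simp add: sum_distrib_left)
  finally show ?thesis .
qed

lemma term_arr:
  "Tr (\<beta> * \<alpha> ^ (i * x) * \<alpha> ^ (j * y)) * \<alpha> ^ (i * a) * \<alpha> ^ (j * b) =
   (\<Sum>k<m. \<beta> ^ (q ^ k) * \<alpha> ^ (i * (x * q ^ k + a)) * \<alpha> ^ (j * (y * q ^ k + b)))"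
proof -
  have "(\<beta> * \<alpha> ^ (i * x) * \<alpha> ^ (j * y)) ^ (q ^ k) * \<alpha> ^ (i * a) * \<alpha> ^ (j * b) =
        \<beta> ^ (q ^ k) * \<alpha> ^ (i * (x * q ^ k + a)) * \<alpha> ^ (j * (y * q ^ k + b))" for k
  proof -
    have e1: "\<alpha> ^ (i * (x * q ^ k + a)) = (\<alpha> ^ (i * x)) ^ (q ^ k) * \<alpha> ^ (i * a)"
      by (simp add: power_add power_mult[symmetric] algebra_simps)
    have e2: "\<alpha> ^ (j * (y * q ^ k + b)) = (\<alpha> ^ (j * y)) ^ (q ^ k) * \<alpha> ^ (j * b)"
      by (simp add: power_add power_mult[symmetric] algebra_simps)
    show ?thesis unfolding e1 e2 by (simp add: power_mult_distrib mult_ac)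
  qed
  then show ?thesis unfolding Tr_def by (simp add: sum_distrib_right)
qed

lemma eval_arr:
  "bicyc_eval \<phi> \<alpha> n (arr \<beta> x y) a b =
   (\<Sum>k<m. if n dvd (x * q ^ k + a) \<and> n dvd (y * q ^ k + b) then \<beta> ^ (q ^ k) else 0)"
proof -
  have "bicyc_eval \<phi> \<alpha> n (arr \<beta> x y) a b =
     (\<Sum>i<n. \<Sum>j<n. \<Sum>k<m. \<beta> ^ (q ^ k) * \<alpha> ^ (i * (x * q ^ k + a)) * \<alpha> ^ (j * (y * q ^ k + b)))"
    unfolding bicyc_eval_def by (intro sum.cong refl) (simp add: phi_arr term_arr)
  also have "\<dots> = (\<Sum>k<m. \<Sum>i<n. \<Sum>j<n. \<beta> ^ (q ^ k) * \<alpha> ^ (i * (x * q ^ k + a)) * \<alpha> ^ (j * (y * q ^ k + b)))"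
    by (simp add: sum.swap[of _ "{..<n}" "{..<m}"] sum.swap[of _ "{..<n}" "{..<m}"])
  also have "\<dots> = (\<Sum>k<m. \<beta> ^ (q ^ k) * ((\<Sum>i<n. \<alpha> ^ (i * (x * q ^ k + a))) * (\<Sum>j<n. \<alpha> ^ (j * (y * q ^ k + b)))))"
    by (intro sum.cong refl) (subst sum_product, simp only: sum_distrib_left mult.assoc)
  also have "\<dots> = (\<Sum>k<m. if n dvd (x * q ^ k + a) \<and> n dvd (y * q ^ k + b) then \<beta> ^ (q ^ k) else 0)"
    by (intro sum.cong refl) (simp add: geo)
  finally show ?thesis .
qed

lemma Z_closed:
  assumes "(x, y) \<in> hyperbolic_zeros q n d"
  shows "((x * q ^ k) mod n, (y * q ^ k) mod n) \<in> hyperbolic_zeros q n d"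
proof -
  from assms obtain x0 y0 k1 where des: "(x0, y0) \<in> designed_set n d"
    and xy: "x = (x0 * q ^ k1) mod n" "y = (y0 * q ^ k1) mod n"
    unfolding hyperbolic_zeros_def cyc_coset_def by auto
  have "(x * q ^ k) mod n = (x0 * q ^ (k1 + k)) mod n"
    unfolding xy by (simp add: mod_mult_left_eq power_add mult.assoc)
  moreover have "(y * q ^ k) mod n = (y0 * q ^ (k1 + k)) mod n"
    unfolding xy by (simp add: mod_mult_left_eq power_add mult.assoc)
  ultimately show ?thesis
    unfolding hyperbolic_zeros_def cyc_coset_def using des by blast
qed

definition COLL :: "nat \<Rightarrow> bool" where
  "COLL d \<longleftrightarrow> (\<exists>x y a b. (x, y) \<in> hyperbolic_zeros q n d \<and> (a, b) \<in> hyperbolic_zeros q n d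
      \<and> n dvd x + a \<and> n dvd y + b)"

lemma A1:
  assumes nc: "\<not> COLL d"
  shows "euclid_dual n (hyperbolic_code \<phi> \<alpha> q n d) \<subseteq> hyperbolic_code \<phi> \<alpha> q n d"
proof
  fix u assume u: "u \<in> euclid_dual n (hyperbolic_code \<phi> \<alpha> q n d)"
  then have ua: "u \<in> arrays n" and uo: "\<And>v. v \<in> hyperbolic_code \<phi> \<alpha> q n d \<Longrightarrow> (\<Sum>i<n. \<Sum>j<n. u i j * v i j) = 0"
    unfolding euclid_dual_def by auto
  have "bicyc_eval \<phi> \<alpha> n u x y = 0" if xyZ: "(x, y) \<in> hyperbolic_zeros q n d" for x y
  proof (rule ccontr)
    define E where "E = bicyc_eval \<phi> \<alpha> n u x y"
    assume "bicyc_eval \<phi> \<alpha> n u x y \<noteq> 0"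
    then have "E \<noteq> 0" unfolding E_def .
    then obtain \<beta> where \<beta>: "(\<Sum>k<m. E ^ (q ^ k) * \<beta> ^ (q ^ k)) \<noteq> 0"
      using nondeg[of "\<lambda>k. E ^ (q ^ k)"] by auto
    have TrE: "Tr (\<beta> * E) \<noteq> 0" using \<beta> unfolding Tr_def by (simp add: power_mult_distrib mult.commute)
    define v where "v = arr \<beta> x y"
    have vcode: "v \<in> hyperbolic_code \<phi> \<alpha> q n d"
      unfolding hyperbolic_code_def
    proof (intro CollectI conjI ballI)
      show "v \<in> arrays n" unfolding v_def by (rule arr_arrays)
      fix ab assume abZ: "ab \<in> hyperbolic_zeros q n d"
      obtain a b where ab: "ab = (a, b)" by fastforce
      have nk: "\<not> (n dvd x * q ^ k + a \<and> n dvd y * q ^ k + b)" for k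
      proof
        assume h: "n dvd x * q ^ k + a \<and> n dvd y * q ^ k + b"
        have "((x * q ^ k) mod n, (y * q ^ k) mod n) \<in> hyperbolic_zeros q n d" by (rule Z_closed[OF xyZ])
        moreover have "n dvd (x * q ^ k) mod n + a" "n dvd (y * q ^ k) mod n + b"
          using h by (simp_all add: dvd_eq_mod_eq_0 mod_add_left_eq)
        ultimately show False using nc abZ ab unfolding COLL_def by blast
      qed
      then have "(\<Sum>k<m. if n dvd (x * q ^ k + a) \<and> n dvd (y * q ^ k + b) then \<beta> ^ (q ^ k) else 0) = 0"
        using nk by (intro sum.neutral ballI if_not_P) blast
      then show "case ab of (a, b) \<Rightarrow> bicyc_eval \<phi> \<alpha> n v a b = 0"
        unfolding ab v_def eval_arr by simp
    qed
    have "\<phi> (\<Sum>i<n. \<Sum>j<n. u i j * v i j) = Tr (\<beta> * E)"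
      unfolding v_def E_def by (rule pair_arr)
    then show False using uo[OF vcode] TrE hom_zero by simp
  qed
  then show "u \<in> hyperbolic_code \<phi> \<alpha> q n d"
    unfolding hyperbolic_code_def using ua by auto
qed

lemma A2:
  assumes coll: "COLL d"
  shows "\<not> euclid_dual n (hyperbolic_code \<phi> \<alpha> q n d) \<subseteq> hyperbolic_code \<phi> \<alpha> q n d"
proof -
  obtain x y a b where xyZ: "(x, y) \<in> hyperbolic_zeros q n d" and abZ: "(a, b) \<in> hyperbolic_zeros q n d"
    and dv: "n dvd x + a" "n dvd y + b" using coll unfolding COLL_def by blast
  define c where "c k = (if n dvd x * q ^ k + a \<and> n dvd y * q ^ k + b then 1 else (0::'b))" for k
  have "c 0 \<noteq> 0" unfolding c_def using dv by simp
  then obtain \<beta> where \<beta>: "(\<Sum>k<m. c k * \<beta> ^ (q ^ k)) \<noteq> 0" using nondeg by blast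
  define u where "u = arr \<beta> x y"
  have "u \<in> euclid_dual n (hyperbolic_code \<phi> \<alpha> q n d)"
    unfolding euclid_dual_def
  proof (intro CollectI conjI ballI)
    show "u \<in> arrays n" unfolding u_def by (rule arr_arrays)
    fix v assume v: "v \<in> hyperbolic_code \<phi> \<alpha> q n d"
    then have "bicyc_eval \<phi> \<alpha> n v x y = 0" using xyZ unfolding hyperbolic_code_def by auto
    then have "\<phi> (\<Sum>i<n. \<Sum>j<n. v i j * u i j) = 0"
      unfolding u_def pair_arr by (simp add: Tr_zero)
    then show "(\<Sum>i<n. \<Sum>j<n. u i j * v i j) = 0" by (simp add: phi_eq0 mult.commute)
  qed
  moreover have "u \<notin> hyperbolic_code \<phi> \<alpha> q n d"
  proof
    assume "u \<in> hyperbolic_code \<phi> \<alpha> q n d"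
    then have "bicyc_eval \<phi> \<alpha> n u a b = 0" using abZ unfolding hyperbolic_code_def by auto
    moreover have "bicyc_eval \<phi> \<alpha> n u a b = (\<Sum>k<m. c k * \<beta> ^ (q ^ k))"
      unfolding u_def eval_arr c_def by (intro sum.cong refl) simp
    ultimately show False using \<beta> by simp
  qed
  ultimately show ?thesis by blast
qed

end



context bsetup
begin

lemma n_ge2: "n \<ge> 2"
proof -
  have "q ^ m \<ge> 2 ^ m" using q_ge2 by (simp add: power_mono)
  moreover have "2 ^ m \<ge> (2::nat) ^ 2" using m_gt by (intro power_increasing) auto
  ultimately show ?thesis using n_def by simp
qed

lemma qm_cong: "[q ^ m = 1] (mod n)"
  unfolding qm cong_def using n_ge2 by (simp add: mod_Suc)

lemma qpow_cong: "[q ^ j = q ^ (j mod m)] (mod n)"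
proof -
  have e: "q ^ j = (q ^ m) ^ (j div m) * q ^ (j mod m)"
    by (simp add: power_mult[symmetric] power_add[symmetric])
  have "[(q ^ m) ^ (j div m) * q ^ (j mod m) = 1 ^ (j div m) * q ^ (j mod m)] (mod n)"
    by (intro cong_mult cong_pow qm_cong cong_refl)
  then show ?thesis unfolding e by simp
qed

lemma shift_cong:
  assumes "[x0 * q ^ a + x1 * q ^ b = 0] (mod n)"
  shows "[x0 * q ^ (a + t) + x1 * q ^ (b + t) = 0] (mod n)"
proof -
  have "[(x0 * q ^ a + x1 * q ^ b) * q ^ t = 0 * q ^ t] (mod n)"
    by (intro cong_mult assms cong_refl)
  then show ?thesis by (simp add: power_add algebra_simps)
qed

lemma red_cong:
  assumes "[x0 * q ^ a + x1 * q ^ b = 0] (mod n)"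
  shows "[x0 * q ^ (a mod m) + x1 * q ^ (b mod m) = 0] (mod n)"
proof -
  have "[x0 * q ^ (a mod m) + x1 * q ^ (b mod m) = x0 * q ^ a + x1 * q ^ b] (mod n)"
    by (intro cong_add cong_mult cong_refl cong_sym[OF qpow_cong])
  then show ?thesis using assms by (rule cong_trans)
qed

lemma norm_pair:
  assumes "n dvd x0 * q ^ k1 + x1 * q ^ k2"
  obtains k where "k < m" "n dvd x0 + q ^ k * x1" "n dvd q ^ (m - k) * x0 + x1"
proof -
  define t where "t = m - k1 mod m"
  define k where "k = (k2 + t) mod m"
  have m0: "m > 0" using m_gt by simp
  have c0: "[x0 * q ^ k1 + x1 * q ^ k2 = 0] (mod n)" using assms by (simp add: cong_0_iff)
  have "(k1 + t) mod m = 0"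
  proof -
    have lt: "k1 mod m < m" using m0 by simp
    have h: "m * (k1 div m) + k1 mod m = k1" by (rule mult_div_mod_eq)
    have h2: "m * (k1 div m + 1) = m * (k1 div m) + m" by simp
    have "k1 + t = m * (k1 div m + 1)" unfolding t_def using h h2 lt by linarith
    then show ?thesis by simp
  qed
  then have c1: "[x0 + x1 * q ^ k = 0] (mod n)"
    using red_cong[OF shift_cong[OF c0, of t]] unfolding k_def by simp
  have km: "k < m" unfolding k_def using m0 by simp
  have c2: "[x0 * q ^ (0 + (m - k)) + x1 * q ^ (k + (m - k)) = 0] (mod n)"
    using shift_cong[of x0 0 x1 k "m - k"] c1 by simp
  have "[x0 * q ^ (m - k) + x1 * 1 = x0 * q ^ (0 + (m - k)) + x1 * q ^ (k + (m - k))] (mod n)"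
  proof -
    have "k + (m - k) = m" using km by simp
    then have "[1 = q ^ (k + (m - k))] (mod n)" using cong_sym[OF qm_cong] by simp
    then show ?thesis by (intro cong_add cong_mult cong_refl) simp
  qed
  from cong_trans[OF this c2] have c3: "[x0 * q ^ (m - k) + x1 = 0] (mod n)" by simp
  show ?thesis
    by (rule that[OF km]) (use c1 c3 in \<open>auto simp: cong_0_iff mult.commute\<close>)
qed

lemma norm_one:
  assumes "n dvd x0 * q ^ k1 + x1 * q ^ k2" and kdef: "k = (k2 + (m - k1 mod m)) mod m"
  shows "k < m" "n dvd x0 + q ^ k * x1" "n dvd q ^ (m - k) * x0 + x1"
proof -
  define t where "t = m - k1 mod m"
  have kk: "k = (k2 + t) mod m" using kdef t_def by simp
  have m0: "m > 0" using m_gt by simp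
  have c0: "[x0 * q ^ k1 + x1 * q ^ k2 = 0] (mod n)" using assms by (simp add: cong_0_iff)
  have "(k1 + t) mod m = 0"
  proof -
    have lt: "k1 mod m < m" using m0 by simp
    have h: "m * (k1 div m) + k1 mod m = k1" by (rule mult_div_mod_eq)
    have h2: "m * (k1 div m + 1) = m * (k1 div m) + m" by simp
    have "k1 + t = m * (k1 div m + 1)" unfolding t_def using h h2 lt by linarith
    then show ?thesis by simp
  qed
  then have c1: "[x0 + x1 * q ^ k = 0] (mod n)"
    using red_cong[OF shift_cong[OF c0, of t]] unfolding kk by simp
  show km: "k < m" unfolding kk using m0 by simp
  have c2: "[x0 * q ^ (0 + (m - k)) + x1 * q ^ (k + (m - k)) = 0] (mod n)"
    using shift_cong[of x0 0 x1 k "m - k"] c1 by simp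
  have "[x0 * q ^ (m - k) + x1 * 1 = x0 * q ^ (0 + (m - k)) + x1 * q ^ (k + (m - k))] (mod n)"
  proof -
    have "k + (m - k) = m" using km by simp
    then have "[1 = q ^ (k + (m - k))] (mod n)" using cong_sym[OF qm_cong] by simp
    then show ?thesis by (intro cong_add cong_mult cong_refl) simp
  qed
  from cong_trans[OF this c2] have c3: "[x0 * q ^ (m - k) + x1 = 0] (mod n)" by simp
  show "n dvd x0 + q ^ k * x1" using c1 by (simp add: cong_0_iff mult.commute)
  show "n dvd q ^ (m - k) * x0 + x1" using c3 by (simp add: cong_0_iff mult.commute)
qed

lemma Z_elim:
  assumes "(x, y) \<in> hyperbolic_zeros q n d"
  obtains X Y k where "1 \<le> X" "X \<le> n" "1 \<le> Y" "Y \<le> n" "X * Y < d"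
    "x = ((X mod n) * q ^ k) mod n" "y = ((Y mod n) * q ^ k) mod n"
  using assms unfolding hyperbolic_zeros_def cyc_coset_def designed_set_def by blast

lemma Z_intro:
  assumes "1 \<le> X" "X \<le> n" "1 \<le> Y" "Y \<le> n" "X * Y < d"
  shows "(((X mod n) * q ^ k) mod n, ((Y mod n) * q ^ k) mod n) \<in> hyperbolic_zeros q n d"
  using assms unfolding hyperbolic_zeros_def cyc_coset_def designed_set_def by blast

definition delta :: nat where
  "delta = (if even m then (q ^ (m div 2) - 1) ^ 2 else (q ^ m - 1) - q ^ ((m - 1) div 2))"

lemma ge_n_of_dvd: "n dvd a \<Longrightarrow> a \<ge> 1 \<Longrightarrow> a \<ge> n"
  using dvd_imp_le by auto

lemma arith_pairs:
  fixes X X1 Y Y1 k :: nat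
  assumes km: "k < m" and pos: "1 \<le> X" "1 \<le> X1" "1 \<le> Y" "1 \<le> Y1"
    and cx1: "X + q ^ k * X1 \<ge> n" and cx2: "q ^ (m - k) * X + X1 \<ge> n"
    and cy1: "Y + q ^ k * Y1 \<ge> n" and cy2: "q ^ (m - k) * Y + Y1 \<ge> n"
  shows "X * Y \<ge> delta \<or> X1 * Y1 \<ge> delta"
proof -
  define K where "K = q ^ k"
  define K' where "K' = q ^ (m - k)"
  have KK: "K * K' = n + 1" unfolding K_def K'_def qm[symmetric] using km by (simp flip: power_add)
  have Kpos: "K \<ge> 1" "K' \<ge> 1" unfolding K_def K'_def using q_ge2 by simp_all
  have c: "n \<le> X + K * X1" "n \<le> K' * X + X1" "n \<le> Y + K * Y1" "n \<le> K' * Y + Y1"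
    using cx1 cx2 cy1 cy2 unfolding K_def K'_def by auto
  have ix1: "int X + int K * int X1 \<ge> int n" using c(1) by (simp only: of_nat_add[symmetric] of_nat_mult[symmetric] of_nat_le_iff)
  have ix2: "int K' * int X + int X1 \<ge> int n" using c(2) by (simp only: of_nat_add[symmetric] of_nat_mult[symmetric] of_nat_le_iff)
  have iy1: "int Y + int K * int Y1 \<ge> int n" using c(3) by (simp only: of_nat_add[symmetric] of_nat_mult[symmetric] of_nat_le_iff)
  have iy2: "int K' * int Y + int Y1 \<ge> int n" using c(4) by (simp only: of_nat_add[symmetric] of_nat_mult[symmetric] of_nat_le_iff)
  have iKK: "int K * int K' = int n + 1" using KK by (simp flip: of_nat_mult)
  show ?thesis
  proof (cases "even m")
    case True
    define h where "h = m div 2"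
    define Q where "Q = q ^ h"
    have mh: "m = h + h" using True unfolding h_def by auto
    have Q2: "Q \<ge> 2"
    proof -
      have "h \<ge> 1" using m_gt mh by simp
      then have "q \<le> q ^ h" using q_ge2 by (simp add: self_le_power)
      then show ?thesis unfolding Q_def using q_ge2 by simp
    qed
    have QQ: "Q ^ 2 = n + 1" unfolding Q_def qm[symmetric] mh by (simp flip: power_add add: power2_eq_square power_mult)
    have iQQ: "(int Q)^2 = int n + 1" using arg_cong[OF QQ, of int] by simp
    have dl: "int delta = (int Q - 1)^2" unfolding delta_def using True Q2 by (simp add: Q_def h_def of_nat_diff)
    have "int X * int Y \<ge> (int Q - 1)^2 \<or> int X1 * int Y1 \<ge> (int Q - 1)^2"
      by (rule even_main[of "int Q" "int K" "int K'" "int n"])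
         (use Q2 iKK iQQ Kpos ix1 ix2 iy1 iy2 pos in auto)
    then show ?thesis unfolding dl[symmetric] by (simp flip: of_nat_mult)
  next
    case False
    define h where "h = (m - 1) div 2"
    define Q0 where "Q0 = q ^ h"
    have mh: "m = Suc (h + h)" using False unfolding h_def by presburger
    have h2: "h \<ge> 2" using m_gt mh by simp
    have Q4: "Q0 \<ge> 4"
    proof -
      have "q ^ h \<ge> 2 ^ h" using q_ge2 by (simp add: power_mono)
      moreover have "2 ^ h \<ge> (2::nat) ^ 2" using h2 by (intro power_increasing) auto
      ultimately show ?thesis unfolding Q0_def by simp
    qed
    have nQ: "n + 1 = q * Q0 ^ 2" unfolding Q0_def qm[symmetric] mh
      by (simp add: power2_eq_square power_add)
    have inQ: "int n + 1 = int q * (int Q0)^2" using arg_cong[OF nQ, of int] by simp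
    have Qn: "Q0 \<le> n"
    proof -
      have a1: "Q0 \<le> Q0 ^ 2" using Q4 by (simp add: power2_eq_square)
      have "2 * Q0 ^ 2 \<le> q * Q0 ^ 2" using q_ge2 by (intro mult_right_mono) auto
      then show ?thesis using a1 nQ Q4 by linarith
    qed
    have "delta = n - Q0" unfolding delta_def Q0_def h_def n_def using False by simp
    then have dl: "int delta = int n - int Q0" using Qn by (simp add: of_nat_diff)
    have "int X * int Y \<ge> int n - int Q0 \<or> int X1 * int Y1 \<ge> int n - int Q0"
    proof (cases "k \<le> h")
      case True
      have "K \<le> Q0" unfolding K_def Q0_def using True q_ge2 by (intro power_increasing) auto
      interpret oddset "int q" "int Q0" "int n" "int K" "int K'"
        by standard (use q_ge2 Q4 inQ iKK Kpos \<open>K \<le> Q0\<close> in auto)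
      have "int X1 * int Y1 \<ge> int n - int Q0 \<or> int X * int Y \<ge> int n - int Q0"
        by (rule odd_main) (use ix1 ix2 iy1 iy2 pos in \<open>auto simp: add.commute mult.commute\<close>)
      then show ?thesis by auto
    next
      case False
      have "K' \<le> Q0" unfolding K'_def Q0_def using False q_ge2 mh by (intro power_increasing) auto
      interpret oddset "int q" "int Q0" "int n" "int K'" "int K"
        by standard (use q_ge2 Q4 inQ iKK Kpos \<open>K' \<le> Q0\<close> in \<open>auto simp: mult.commute\<close>)
      show ?thesis
        by (rule odd_main) (use ix1 ix2 iy1 iy2 pos in \<open>auto simp: add.commute mult.commute\<close>)
    qed
    then show ?thesis unfolding dl[symmetric] by (simp flip: of_nat_mult)
  qed
qed

lemma even_Q:
  assumes "even m"
  shows "q ^ (m div 2) * q ^ (m div 2) = n + 1" "q ^ (m div 2) \<ge> 2"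
proof -
  have "m div 2 + m div 2 = m" using assms by auto
  then show "q ^ (m div 2) * q ^ (m div 2) = n + 1" unfolding qm[symmetric] by (simp flip: power_add)
  have "m div 2 \<ge> 1" using m_gt by simp
  then have "q \<le> q ^ (m div 2)" using q_ge2 by (simp add: self_le_power)
  then show "q ^ (m div 2) \<ge> 2" using q_ge2 by simp
qed

lemma even_facts:
  fixes Q :: nat
  assumes QQ: "Q * Q = n + 1" and Q2: "Q \<ge> 2"
  shows "(Q - 1) * Q = n + 1 - Q" "(Q - 1) * Q < n" "Q - 1 < n" "(Q - 1) * (Q - 1) < n"
proof -
  show e: "(Q - 1) * Q = n + 1 - Q" using QQ by (simp add: algebra_simps)
  have "Q \<le> Q * Q" using Q2 by simp
  then show l: "(Q - 1) * Q < n" using e Q2 QQ by linarith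
  have "Q - 1 \<le> (Q - 1) * Q" using Q2 by simp
  then show "Q - 1 < n" using l by linarith
  have "(Q - 1) * (Q - 1) \<le> (Q - 1) * Q" by (simp add: mult_left_mono)
  then show "(Q - 1) * (Q - 1) < n" using l by linarith
qed

lemma delta_lt: "delta < n"
proof (cases "even m")
  case True
  note E = even_Q[OF True]
  show ?thesis unfolding delta_def using True even_facts(4)[OF E] by (simp add: power2_eq_square)
next
  case False
  have "q ^ ((m - 1) div 2) \<ge> 1" using q_ge2 by simp
  then show ?thesis unfolding delta_def using False n_def n_ge2 by simp
qed

lemma B1:
  assumes dd: "d \<le> delta"
  shows "\<not> COLL d"
proof
  assume "COLL d"
  then obtain x y a b where xyZ: "(x, y) \<in> hyperbolic_zeros q n d" and abZ: "(a, b) \<in> hyperbolic_zeros q n d"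
    and dv: "n dvd x + a" "n dvd y + b" unfolding COLL_def by blast
  obtain X Y k1 where XY: "1 \<le> X" "X \<le> n" "1 \<le> Y" "Y \<le> n" "X * Y < d"
    "x = ((X mod n) * q ^ k1) mod n" "y = ((Y mod n) * q ^ k1) mod n" using Z_elim[OF xyZ] by blast
  obtain X1 Y1 k2 where XY1: "1 \<le> X1" "X1 \<le> n" "1 \<le> Y1" "Y1 \<le> n" "X1 * Y1 < d"
    "a = ((X1 mod n) * q ^ k2) mod n" "b = ((Y1 mod n) * q ^ k2) mod n" using Z_elim[OF abZ] by blast
  have dn: "d \<le> n" using dd delta_lt by simp
  have lt: "X < n" "Y < n" "X1 < n" "Y1 < n"
  proof -
    have "X \<le> X * Y" "Y \<le> X * Y" "X1 \<le> X1 * Y1" "Y1 \<le> X1 * Y1" using XY XY1 by simp_all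
    then show "X < n" "Y < n" "X1 < n" "Y1 < n" using XY(5) XY1(5) dn by linarith+
  qed
  have d1: "n dvd X * q ^ k1 + X1 * q ^ k2"
    using dv(1) unfolding XY(6) XY1(6) using lt by (simp add: dvd_eq_mod_eq_0 mod_add_eq)
  have d2: "n dvd Y * q ^ k1 + Y1 * q ^ k2"
    using dv(2) unfolding XY(7) XY1(7) using lt by (simp add: dvd_eq_mod_eq_0 mod_add_eq)
  define k where "k = (k2 + (m - k1 mod m)) mod m"
  note nx = norm_one[OF d1 k_def] and ny = norm_one[OF d2 k_def]
  have qk: "q ^ k \<ge> 1" "q ^ (m - k) \<ge> 1" using q_ge2 by simp_all
  have "X + q ^ k * X1 \<ge> n" using nx(2) XY(1) by (intro ge_n_of_dvd) auto
  moreover have "q ^ (m - k) * X + X1 \<ge> n" using nx(3) XY1(1) by (intro ge_n_of_dvd) auto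
  moreover have "Y + q ^ k * Y1 \<ge> n" using ny(2) XY(3) by (intro ge_n_of_dvd) auto
  moreover have "q ^ (m - k) * Y + Y1 \<ge> n" using ny(3) XY1(3) by (intro ge_n_of_dvd) auto
  ultimately have "X * Y \<ge> delta \<or> X1 * Y1 \<ge> delta"
    using arith_pairs[OF nx(1) XY(1) XY1(1) XY(3) XY1(3)] by blast
  then show False using XY(5) XY1(5) dd by linarith
qed

lemma B2:
  assumes dd: "\<not> d \<le> delta"
  shows "COLL d"
proof (cases "even m")
  case True
  define Q where "Q = q ^ (m div 2)"
  note E = even_Q[OF True, folded Q_def]
  note F = even_facts[OF E]
  have dl: "delta = (Q - 1) * (Q - 1)" unfolding delta_def Q_def using True by (simp add: power2_eq_square)
  have Q1: "1 \<le> Q - 1" using E by simp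
  have m1: "(((Q - 1) mod n) * q ^ 0) mod n = Q - 1" using F by simp
  have m2: "(((Q - 1) mod n) * q ^ (m div 2)) mod n = (Q - 1) * Q" using F unfolding Q_def by simp
  have z1: "(Q - 1, Q - 1) \<in> hyperbolic_zeros q n d"
    using Z_intro[of "Q - 1" "Q - 1" d 0] Q1 F dd dl unfolding m1 by simp
  have z2: "((Q - 1) * Q, (Q - 1) * Q) \<in> hyperbolic_zeros q n d"
    using Z_intro[of "Q - 1" "Q - 1" d "m div 2"] Q1 F dd dl unfolding m2 by simp
  have "Q - 1 + (Q - 1) * Q = n" using F E by simp
  then show ?thesis unfolding COLL_def using z1 z2 by (intro exI[of _ "Q - 1"] exI[of _ "(Q - 1) * Q"]) auto
next
  case False
  define h where "h = (m - 1) div 2"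
  define Q0 where "Q0 = q ^ h"
  have mh: "m = Suc (h + h)" using False unfolding h_def by presburger
  have h2: "h \<ge> 2" using m_gt mh by simp
  have Q4: "Q0 \<ge> 4"
  proof -
    have "q ^ h \<ge> 2 ^ h" using q_ge2 by (simp add: power_mono)
    moreover have "2 ^ h \<ge> (2::nat) ^ 2" using h2 by (intro power_increasing) auto
    ultimately show ?thesis unfolding Q0_def by simp
  qed
  have nQ: "n + 1 = q * Q0 * Q0" unfolding Q0_def qm[symmetric] mh by (simp add: power_add mult.assoc)
  have dl: "delta = n - Q0" unfolding delta_def Q0_def h_def n_def using False by simp
  have qQ: "q * Q0 + 2 \<le> n"
  proof -
    have "q * Q0 * 4 \<le> q * Q0 * Q0" using Q4 by (intro mult_left_mono) auto
    moreover have "q * Q0 \<ge> 1" using q_ge2 Q4 by simp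
    ultimately show ?thesis using nQ by linarith
  qed
  have QqQ: "Q0 \<le> q * Q0" using q_ge2 by simp
  have Qn: "Q0 < n" using qQ QqQ by linarith
  have e: "(n - q * Q0) * Q0 = n * (Q0 - 2) + (n - 1)"
  proof -
    have "(n - q * Q0) * Q0 + q * Q0 * Q0 = n * Q0" using qQ by (simp add: algebra_simps)
    then have "(n - q * Q0) * Q0 + (n + 1) = n * Q0" using nQ by simp
    moreover have "n * Q0 = n * (Q0 - 2) + 2 * n" using Q4 by (simp add: algebra_simps)
    ultimately show ?thesis using n_ge2 by linarith
  qed
  have m1: "((1 mod n) * q ^ h) mod n = Q0" using n_ge2 Qn unfolding Q0_def by simp
  have m2: "(((n - q * Q0) mod n) * q ^ h) mod n = n - 1"
  proof -
    have "q * Q0 \<ge> 1" using q_ge2 Q4 by simp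
    then have "(n - q * Q0) mod n = n - q * Q0" using qQ by (intro mod_less) linarith
    then have "(((n - q * Q0) mod n) * q ^ h) mod n = (n * (Q0 - 2) + (n - 1)) mod n"
      using e unfolding Q0_def by simp
    also have "\<dots> = (n - 1) mod n" by (simp only: mod_mult_self4)
    also have "\<dots> = n - 1" using n_ge2 by simp
    finally show ?thesis .
  qed
  have z1: "(Q0, n - 1) \<in> hyperbolic_zeros q n d"
  proof -
    have "n - q * Q0 < d" using dd dl QqQ by linarith
    moreover have "1 \<le> n - q * Q0" using qQ by linarith
    ultimately show ?thesis using Z_intro[of 1 "n - q * Q0" d h] n_ge2 unfolding m1 m2 by simp
  qed
  have m3: "(((n - Q0) mod n) * q ^ 0) mod n = n - Q0" using Qn Q4 by simp
  have m4: "((1 mod n) * q ^ 0) mod n = 1" using n_ge2 by simp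
  have z2: "(n - Q0, 1) \<in> hyperbolic_zeros q n d"
    using Z_intro[of "n - Q0" 1 d 0] n_ge2 Qn Q4 dd dl unfolding m3 m4 by simp
  have "n dvd Q0 + (n - Q0)" "n dvd (n - 1) + 1" using Qn n_ge2 by simp_all
  then show ?thesis unfolding COLL_def using z1 z2 by blast
qed

end

theorem theorem3:
  fixes \<phi> :: "'a::{field,finite} \<Rightarrow> 'b::{field,finite}"
    and \<alpha> :: 'b and q m n d :: nat
  assumes q_card: "q = card (UNIV :: 'a set)"
    and q_pp: "\<exists>p k. prime p \<and> 0 < k \<and> q = p ^ k"
    and m_gt: "m > 3"
    and n_def: "n = q ^ m - 1"
    and ext_card: "card (UNIV :: 'b set) = q ^ m"
    and hom_add: "\<And>a b. \<phi> (a + b) = \<phi> a + \<phi> b"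
    and hom_mult: "\<And>a b. \<phi> (a * b) = \<phi> a * \<phi> b"
    and hom_one: "\<phi> 1 = 1"
    and prim1: "\<alpha> ^ n = 1"
    and prim2: "\<forall>k. 0 < k \<and> k < n \<longrightarrow> \<alpha> ^ k \<noteq> 1"
    and d_ge: "d \<ge> 2"
  shows "euclid_dual n (hyperbolic_code \<phi> \<alpha> q n d) \<subseteq> hyperbolic_code \<phi> \<alpha> q n d
     \<longleftrightarrow> d \<le> (if even m then (q ^ (m div 2) - 1) ^ 2 else (q ^ m - 1) - q ^ ((m - 1) div 2))"
proof -
  interpret bsetup \<phi> \<alpha> q m n
    by unfold_locales (use q_card q_pp m_gt n_def ext_card hom_add hom_mult hom_one prim1 prim2 in auto)
  have "euclid_dual n (hyperbolic_code \<phi> \<alpha> q n d) \<subseteq> hyperbolic_code \<phi> \<alpha> q n d \<longleftrightarrow> \<not> COLL d"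
    using A1 A2 by blast
  also have "\<dots> \<longleftrightarrow> d \<le> delta" using B1 B2 by blast
  finally show ?thesis unfolding delta_def .
qed

end
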